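(* Let $\mathbf L=(L,\le,\wedge,\vee,0,1,\nu)$ be a bounded lattice with a minimal quasi-complementation operator and let $(X,\parallel,Y,S_\vee)$ be its canonical frame. Then $(X_a)^*=X_{\nu a}$ for every $a\in L$, and the map $a\mapsto X_a$ is an isomorphism of quasi-complemented lattices from $\mathbf L$ onto $(\mathtt{KO}\mathcal G(\mathfrak X),\subseteq,\cap,\vee,\emptyset,X,(\cdot)^* )$.
   Context: A minimal quasi-complementation operator on a bounded lattice is an antitone operation $\nu$ with $\nu 0=1$ and $\nu(a\vee b)=\nu a\wedge\nu b$. Canonical frame: $X$ the proper filters of $\mathbf L$, $Y$ the proper ideals, $x\parallel y$ iff $x\cap y\neq\emptyset$; $\widehat\nu(x)$ is the ideal generated by $\{\nu a:a\in x\}$; $yS_\vee x$ iff $\widehat\nu(x)\subseteq y$ (equivalently, $a\in x$ implies $\nu a\in y$ for all $a$). $X_a=\{x\in X:a\in x\}$; $\mathfrak X$ is $X$ with the topology generated by $\{X_a\}$. For $U\subseteq X$, $U'=\{y:\forall x\in U\;x\parallel y\}$; for $V\subseteq Y$, $V'=\{x:\forall y\in V\;x\parallel y\}$; $\mathtt{KO}\mathcal G(\mathfrak X)$ is the set of compact-open subsets $A$ of $\mathfrak X$ with $A=A''$, with join $A\vee C=(A\cup C)''$. Incompatibility: $x\perp z$ iff $\forall y(yS_\vee z\Rightarrow x\parallel y)$ (equivalently, some $e\in z$ has $\nu e\in x$); $A^*=\{x:\forall z\in A\;x\perp z\}$. *)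

theory Defs
  imports "HOL-Analysis.Analysis"
begin

definition mqc :: "('a::bounded_lattice \<Rightarrow> 'a) \<Rightarrow> bool" where
  "mqc \<nu> \<longleftrightarrow> antimono \<nu> \<and> \<nu> bot = top \<and> (\<forall>a b. \<nu> (sup a b) = inf (\<nu> a) (\<nu> b))"

definition lattice_filter :: "'a::bounded_lattice set \<Rightarrow> bool" where
  "lattice_filter F \<longleftrightarrow> F \<noteq> {} \<and> (\<forall>a b. a \<in> F \<longrightarrow> a \<le> b \<longrightarrow> b \<in> F)
     \<and> (\<forall>a\<in>F. \<forall>b\<in>F. inf a b \<in> F)"

definition lattice_ideal :: "'a::bounded_lattice set \<Rightarrow> bool" where
  "lattice_ideal I \<longleftrightarrow> I \<noteq> {} \<and> (\<forall>a b. a \<in> I \<longrightarrow> b \<le> a \<longrightarrow> b \<in> I)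
     \<and> (\<forall>a\<in>I. \<forall>b\<in>I. sup a b \<in> I)"

definition proper_filter :: "'a::bounded_lattice set \<Rightarrow> bool" where
  "proper_filter F \<longleftrightarrow> lattice_filter F \<and> F \<noteq> UNIV"

definition proper_ideal :: "'a::bounded_lattice set \<Rightarrow> bool" where
  "proper_ideal I \<longleftrightarrow> lattice_ideal I \<and> I \<noteq> UNIV"

text \<open>Canonical frame: X = proper filters, Y = proper ideals.\<close>
definition FX :: "'a::bounded_lattice set set" where
  "FX = {x. proper_filter x}"

definition FY :: "'a::bounded_lattice set set" where
  "FY = {y. proper_ideal y}"

definition par :: "'a set \<Rightarrow> 'a set \<Rightarrow> bool" where
  "par x y \<longleftrightarrow> x \<inter> y \<noteq> {}"

definition ideal_gen :: "'a::bounded_lattice set \<Rightarrow> 'a set" where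
  "ideal_gen S = \<Inter>{I. lattice_ideal I \<and> S \<subseteq> I}"

definition nu_hat :: "('a::bounded_lattice \<Rightarrow> 'a) \<Rightarrow> 'a set \<Rightarrow> 'a set" where
  "nu_hat \<nu> x = ideal_gen (\<nu> ` x)"

definition SV :: "('a::bounded_lattice \<Rightarrow> 'a) \<Rightarrow> 'a set \<Rightarrow> 'a set \<Rightarrow> bool" where
  "SV \<nu> y x \<longleftrightarrow> nu_hat \<nu> x \<subseteq> y"

definition Xa :: "'a::bounded_lattice \<Rightarrow> 'a set set" where
  "Xa a = {x \<in> FX. a \<in> x}"

definition primeU :: "'a::bounded_lattice set set \<Rightarrow> 'a set set" where
  "primeU U = {y \<in> FY. \<forall>x\<in>U. par x y}"

definition primeV :: "'a::bounded_lattice set set \<Rightarrow> 'a set set" where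
  "primeV V = {x \<in> FX. \<forall>y\<in>V. par x y}"

definition frame_top :: "'a::bounded_lattice set topology" where
  "frame_top = topology_generated_by (range Xa)"

definition KOG :: "'a::bounded_lattice set set set" where
  "KOG = {A. compactin frame_top A \<and> openin frame_top A \<and> A = primeV (primeU A)}"

definition gjoin :: "'a::bounded_lattice set set \<Rightarrow> 'a set set \<Rightarrow> 'a set set" where
  "gjoin A C = primeV (primeU (A \<union> C))"

definition perp :: "('a::bounded_lattice \<Rightarrow> 'a) \<Rightarrow> 'a set \<Rightarrow> 'a set \<Rightarrow> bool" where
  "perp \<nu> x z \<longleftrightarrow> (\<forall>y\<in>FY. SV \<nu> y z \<longrightarrow> par x y)"

definition star :: "('a::bounded_lattice \<Rightarrow> 'a) \<Rightarrow> 'a set set \<Rightarrow> 'a set set" where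
  "star \<nu> A = {x \<in> FX. \<forall>z\<in>A. perp \<nu> x z}"

end

theory Submission
  imports Defs
begin

lemma filter_top: "lattice_filter F \<Longrightarrow> top \<in> F"
  unfolding lattice_filter_def by auto

lemma ideal_bot: "lattice_ideal I \<Longrightarrow> bot \<in> I"
  unfolding lattice_ideal_def by auto

lemma pfilter_bot: "proper_filter F \<Longrightarrow> bot \<notin> F"
  unfolding proper_filter_def lattice_filter_def by (metis UNIV_eq_I bot_least)

lemma pideal_top: "proper_ideal I \<Longrightarrow> top \<notin> I"
  unfolding proper_ideal_def lattice_ideal_def by (metis UNIV_eq_I top_greatest)

lemma up_FX: "(a::'a::bounded_lattice) \<noteq> bot \<Longrightarrow> {b. a \<le> b} \<in> FX"
  unfolding FX_def proper_filter_def lattice_filter_def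
  by (auto intro: order_trans) (metis UNIV_I bot_unique mem_Collect_eq)

lemma down_FY: "(a::'a::bounded_lattice) \<noteq> top \<Longrightarrow> {b. b \<le> a} \<in> FY"
  unfolding FY_def proper_ideal_def lattice_ideal_def
  by (auto intro: order_trans) (metis UNIV_I top_unique mem_Collect_eq)

lemma filter_up: "x \<in> FX \<Longrightarrow> a \<in> x \<Longrightarrow> a \<le> b \<Longrightarrow> b \<in> x"
  unfolding FX_def proper_filter_def lattice_filter_def by auto

lemma filter_inf: "x \<in> FX \<Longrightarrow> a \<in> x \<Longrightarrow> b \<in> x \<Longrightarrow> inf a b \<in> x"
  unfolding FX_def proper_filter_def lattice_filter_def by auto

lemma ideal_down: "y \<in> FY \<Longrightarrow> a \<in> y \<Longrightarrow> b \<le> a \<Longrightarrow> b \<in> y"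
  unfolding FY_def proper_ideal_def lattice_ideal_def by auto

lemma ideal_sup: "y \<in> FY \<Longrightarrow> a \<in> y \<Longrightarrow> b \<in> y \<Longrightarrow> sup a b \<in> y"
  unfolding FY_def proper_ideal_def lattice_ideal_def by auto

lemma primeU_UN1: "y \<in> primeU (\<Union>(Xa ` B)) \<Longrightarrow> b \<in> B \<Longrightarrow> b \<in> (y::'a::bounded_lattice set)"
proof -
  assume y: "y \<in> primeU (\<Union>(Xa ` B))" and b: "b \<in> B"
  have "y \<in> FY" using y unfolding primeU_def by auto
  show "b \<in> y"
  proof (cases "b = bot")
    case True then show ?thesis using \<open>y \<in> FY\<close> ideal_bot unfolding FY_def proper_ideal_def by auto
  next
    case False
    then have "{c. b \<le> c} \<in> Xa b" using up_FX unfolding Xa_def by auto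
    then have "par {c. b \<le> c} y" using y b unfolding primeU_def by auto
    then obtain d where "b \<le> d" "d \<in> y" unfolding par_def by auto
    then show ?thesis using ideal_down \<open>y \<in> FY\<close> by blast
  qed
qed

lemma primeU_UN: "primeU (\<Union>(Xa ` B)) = {y \<in> FY. B \<subseteq> (y::'a::bounded_lattice set)}"
proof (intro equalityI subsetI)
  fix y assume "y \<in> primeU (\<Union>(Xa ` B))"
  then show "y \<in> {y \<in> FY. B \<subseteq> y}" using primeU_UN1[of y B] unfolding primeU_def by auto
next
  fix y assume "y \<in> {y \<in> FY. B \<subseteq> y}"
  then show "y \<in> primeU (\<Union>(Xa ` B))" unfolding primeU_def Xa_def par_def by auto
qed

lemma primeV_pt: "primeV {y \<in> FY. (c::'a::bounded_lattice) \<in> y} = Xa c"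
proof safe
  fix x assume x: "x \<in> primeV {y \<in> FY. c \<in> y}"
  then have xF: "x \<in> FX" unfolding primeV_def by auto
  show "x \<in> Xa c"
  proof (cases "c = top")
    case True then show ?thesis using xF filter_top unfolding Xa_def FX_def proper_filter_def by auto
  next
    case False
    then have "{d. d \<le> c} \<in> FY" by (rule down_FY)
    then have "par x {d. d \<le> c}" using x unfolding primeV_def by auto
    then obtain d where "d \<le> c" "d \<in> x" unfolding par_def by auto
    then show ?thesis using filter_up xF unfolding Xa_def by blast
  qed
next
  fix x assume "x \<in> Xa c"
  then show "x \<in> primeV {y \<in> FY. c \<in> y}" unfolding primeV_def Xa_def par_def by auto
qed

lemma fin_sup: "finite B \<Longrightarrow> \<exists>c::'a::bounded_lattice. \<forall>y\<in>FY. (B \<subseteq> y \<longleftrightarrow> c \<in> y)"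
proof (induction B rule: finite_induct)
  case empty
  then show ?case using ideal_bot unfolding FY_def proper_ideal_def by auto
next
  case (insert b B)
  then obtain c where c: "\<forall>y\<in>FY. (B \<subseteq> y \<longleftrightarrow> c \<in> y)" by auto
  have "\<forall>y\<in>FY. (insert b B \<subseteq> y \<longleftrightarrow> sup b c \<in> y)"
  proof
    fix y :: "'a set" assume y: "y \<in> FY"
    have "sup b c \<in> y \<longleftrightarrow> b \<in> y \<and> c \<in> y"
      using ideal_sup[OF y, of b c] ideal_down[OF y _ sup_ge1, of b c] ideal_down[OF y _ sup_ge2, of b c]
      by blast
    then show "(insert b B \<subseteq> y \<longleftrightarrow> sup b c \<in> y)" using c y by auto
  qed
  then show ?case by blast
qed

lemma gal_fin: "finite B \<Longrightarrow> \<exists>c::'a::bounded_lattice. primeV (primeU (\<Union>(Xa ` B))) = Xa c"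
proof -
  assume "finite B"
  then obtain c::'a where c: "\<forall>y\<in>FY. (B \<subseteq> y \<longleftrightarrow> c \<in> y)" using fin_sup by blast
  have "primeU (\<Union>(Xa ` B)) = {y \<in> FY. c \<in> y}" unfolding primeU_UN using c by auto
  then show ?thesis using primeV_pt[of c] by auto
qed

lemma Xa_gal: "primeV (primeU (Xa c)) = Xa c"
proof -
  have "primeU (Xa c) = {y \<in> FY. c \<in> y}" using primeU_UN[of "{c}"] by simp
  then show ?thesis using primeV_pt[of c] by simp
qed

lemma Xa_le: "((a::'a::bounded_lattice) \<le> b) = (Xa a \<subseteq> Xa b)"
proof
  assume "a \<le> b" then show "Xa a \<subseteq> Xa b" unfolding Xa_def using filter_up by blast
next
  assume h: "Xa a \<subseteq> Xa b"
  show "a \<le> b"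
  proof (cases "a = bot")
    case True then show ?thesis by simp
  next
    case False
    then have "{c. a \<le> c} \<in> Xa a" using up_FX unfolding Xa_def by auto
    then show ?thesis using h unfolding Xa_def by auto
  qed
qed

lemma Xa_inf: "Xa (inf a b) = Xa a \<inter> (Xa (b::'a::bounded_lattice))"
proof (intro equalityI subsetI)
  fix x assume "x \<in> Xa (inf a b)"
  then have "x \<in> FX" "inf a b \<in> x" unfolding Xa_def by auto
  then show "x \<in> Xa a \<inter> Xa b" unfolding Xa_def
    using filter_up[of x "inf a b" a] filter_up[of x "inf a b" b] by simp
next
  fix x assume "x \<in> Xa a \<inter> Xa b"
  then show "x \<in> Xa (inf a b)" unfolding Xa_def using filter_inf by auto
qed

lemma Xa_bot: "Xa (bot::'a::bounded_lattice) = {}"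
  unfolding Xa_def FX_def using pfilter_bot by auto

lemma Xa_top: "Xa (top::'a::bounded_lattice) = FX"
  unfolding Xa_def FX_def proper_filter_def using filter_top by auto

lemma Xa_sup: "Xa (sup a b) = gjoin (Xa a) (Xa (b::'a::bounded_lattice))"
proof -
  have e: "Xa a \<union> Xa b = \<Union>(Xa ` {a,b})" by auto
  have "\<forall>y\<in>FY. ({a,b} \<subseteq> y) = (sup a b \<in> y)"
  proof
    fix y :: "'a set" assume y: "y \<in> FY"
    show "({a,b} \<subseteq> y) = (sup a b \<in> y)"
      using ideal_sup[OF y, of a b] ideal_down[OF y _ sup_ge1, of a b] ideal_down[OF y _ sup_ge2, of a b]
      by blast
  qed
  then have "primeU (Xa a \<union> Xa b) = {y \<in> FY. sup a b \<in> y}"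
    unfolding e primeU_UN by auto
  then show ?thesis unfolding gjoin_def using primeV_pt by metis
qed

lemma gen_open: "generate_topology_on (range Xa) U \<Longrightarrow> \<exists>B. U = \<Union>(Xa ` (B::'a::bounded_lattice set))"
proof (induction rule: generate_topology_on.induct)
  case Empty
  then show ?case by (rule exI[of _ "{}"]) simp
next
  case (Int a b)
  then obtain B1 B2 where ab: "a = \<Union>(Xa ` B1)" "b = \<Union>(Xa ` B2)" by auto
  let ?C = "{inf b1 b2 | b1 b2. b1 \<in> B1 \<and> b2 \<in> B2}"
  have "a \<inter> b = \<Union>(Xa ` ?C)"
  proof (intro equalityI subsetI)
    fix x assume "x \<in> a \<inter> b"
    then obtain b1 b2 where "b1 \<in> B1" "b2 \<in> B2" "x \<in> Xa b1" "x \<in> Xa b2" using ab by auto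
    then have "inf b1 b2 \<in> ?C" "x \<in> Xa (inf b1 b2)" using Xa_inf by auto
    then show "x \<in> \<Union>(Xa ` ?C)" by blast
  next
    fix x assume "x \<in> \<Union>(Xa ` ?C)"
    then obtain b1 b2 where "b1 \<in> B1" "b2 \<in> B2" "x \<in> Xa (inf b1 b2)" by auto
    then show "x \<in> a \<inter> b" using ab Xa_inf by auto
  qed
  then show ?case by blast
next
  case (UN K)
  then have "\<forall>k\<in>K. \<exists>B. k = \<Union>(Xa ` B)" by auto
  then obtain f where f: "\<forall>k\<in>K. k = \<Union>(Xa ` f k)"
    using bchoice[of K "\<lambda>k B. k = \<Union>(Xa ` B)"] by blast
  then have "\<Union>K = \<Union>(Xa ` (\<Union>(f ` K)))" by auto
  then show ?case by blast
next
  case (Basis s)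
  then obtain c where "s = Xa c" by auto
  then show ?case by (intro exI[of _ "{c}"]) simp
qed

lemma topspace_ft: "topspace frame_top = (FX :: 'a::bounded_lattice set set)"
proof -
  have "\<Union>(range Xa) = (FX :: 'a set set)"
    using Xa_top unfolding Xa_def by auto
  then show ?thesis unfolding frame_top_def by simp
qed

lemma open_ft: "openin frame_top U \<Longrightarrow> \<exists>B. U = \<Union>(Xa ` (B::'a::bounded_lattice set))"
  unfolding frame_top_def using openin_topology_generated_by gen_open by blast

lemma Xa_open: "openin frame_top (Xa a)"
  unfolding frame_top_def by (rule topology_generated_by_Basis) simp

lemma Xa_compact: "compactin frame_top (Xa (a::'a::bounded_lattice))"
  unfolding compactin_def
proof safe
  fix x assume "x \<in> Xa a" then show "x \<in> topspace frame_top"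
    unfolding topspace_ft Xa_def by auto
next
  fix \<U> assume op: "\<forall>U\<in>\<U>. openin frame_top U" and cov: "Xa a \<subseteq> \<Union>\<U>"
  show "\<exists>\<F>. finite \<F> \<and> \<F> \<subseteq> \<U> \<and> Xa a \<subseteq> \<Union>\<F>"
  proof (cases "a = bot")
    case True then show ?thesis using Xa_bot by (intro exI[of _ "{}"]) auto
  next
    case False
    then have "{c. a \<le> c} \<in> Xa a" using up_FX unfolding Xa_def by auto
    then obtain U where U: "U \<in> \<U>" "{c. a \<le> c} \<in> U" using cov by auto
    then obtain B where B: "U = \<Union>(Xa ` B)" using op open_ft by blast
    then obtain b where "b \<in> B" "{c. a \<le> c} \<in> Xa b" using U by auto
    then have "a \<le> b" unfolding Xa_def by auto
    then have "Xa a \<subseteq> U" using B \<open>b \<in> B\<close> Xa_le by blast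
    then show ?thesis using U by (intro exI[of _ "{U}"]) auto
  qed
qed

lemma KOG_surj: "A \<in> KOG \<Longrightarrow> \<exists>c::'a::bounded_lattice. A = Xa c"
proof -
  assume "A \<in> KOG"
  then have cp: "compactin frame_top A" and op: "openin frame_top A"
    and st: "A = primeV (primeU A)" unfolding KOG_def by auto
  obtain B :: "'a set" where B: "A = \<Union>(Xa ` B)" using open_ft op by blast
  have "\<forall>U\<in>Xa ` B. openin frame_top U" using Xa_open by auto
  then obtain F where F: "finite F" "F \<subseteq> Xa ` B" "A \<subseteq> \<Union>F"
    using cp B unfolding compactin_def by (metis order_refl)
  then obtain B' where B': "B' \<subseteq> B" "finite B'" "F = Xa ` B'"
    using finite_subset_image by metis
  have "A = \<Union>(Xa ` B')" using B B' F by auto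
  then show ?thesis using st gal_fin B'(2) by metis
qed

lemma nu_hat_sub: "z \<in> FX \<Longrightarrow> nu_hat \<nu> z \<subseteq> y \<Longrightarrow> e \<in> z \<Longrightarrow> \<nu> e \<in> y"
  unfolding nu_hat_def ideal_gen_def by auto

lemma nu_hat_down:
  assumes m: "mqc \<nu>" and z: "z \<in> FX"
  shows "nu_hat \<nu> z \<subseteq> {d. \<exists>e\<in>z. d \<le> \<nu> e}"
proof -
  have "lattice_ideal {d. \<exists>e\<in>z. d \<le> \<nu> e}"
    unfolding lattice_ideal_def
  proof safe
    show "{d. \<exists>e\<in>z. d \<le> \<nu> e} = {} \<Longrightarrow> False"
      using z filter_top unfolding FX_def proper_filter_def by auto
  next
    fix a b e assume "b \<le> a" "e \<in> z" "a \<le> \<nu> e"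
    then show "\<exists>e\<in>z. b \<le> \<nu> e" using order_trans by blast
  next
    fix a b e1 e2 assume h: "e1 \<in> z" "a \<le> \<nu> e1" "e2 \<in> z" "b \<le> \<nu> e2"
    have an: "antimono \<nu>" using m unfolding mqc_def by auto
    have "\<nu> e1 \<le> \<nu> (inf e1 e2)" "\<nu> e2 \<le> \<nu> (inf e1 e2)"
      using an unfolding antimono_def by auto
    then have "sup a b \<le> \<nu> (inf e1 e2)" using h by (meson le_sup_iff order_trans)
    moreover have "inf e1 e2 \<in> z" using filter_inf z h by blast
    ultimately show "\<exists>e\<in>z. sup a b \<le> \<nu> e" by blast
  qed
  moreover have "\<nu> ` z \<subseteq> {d. \<exists>e\<in>z. d \<le> \<nu> e}" by auto
  ultimately show ?thesis unfolding nu_hat_def ideal_gen_def by auto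
qed

lemma perp_iff:
  assumes m: "mqc \<nu>" and z: "z \<in> FX" and x: "x \<in> FX"
  shows "perp \<nu> x z \<longleftrightarrow> (\<exists>e\<in>z. \<nu> e \<in> x)"
proof
  assume p: "perp \<nu> x z"
  let ?I = "{d. \<exists>e\<in>z. d \<le> \<nu> e}"
  show "\<exists>e\<in>z. \<nu> e \<in> x"
  proof (cases "top \<in> ?I")
    case True
    then obtain e where "e \<in> z" "\<nu> e = top" using top_unique by auto
    moreover have "top \<in> x" using x filter_top unfolding FX_def proper_filter_def by auto
    ultimately show ?thesis by metis
  next
    case False
    have "lattice_ideal ?I"
      unfolding lattice_ideal_def
    proof safe
      show "?I = {} \<Longrightarrow> False"
        using z filter_top unfolding FX_def proper_filter_def by auto
    next
      fix a b e assume "b \<le> a" "e \<in> z" "a \<le> \<nu> e"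
      then show "\<exists>e\<in>z. b \<le> \<nu> e" using order_trans by blast
    next
      fix a b e1 e2 assume h: "e1 \<in> z" "a \<le> \<nu> e1" "e2 \<in> z" "b \<le> \<nu> e2"
      have an: "antimono \<nu>" using m unfolding mqc_def by auto
      have "\<nu> e1 \<le> \<nu> (inf e1 e2)" "\<nu> e2 \<le> \<nu> (inf e1 e2)"
        using an unfolding antimono_def by auto
      then have "sup a b \<le> \<nu> (inf e1 e2)" using h by (meson le_sup_iff order_trans)
      moreover have "inf e1 e2 \<in> z" using filter_inf z h by blast
      ultimately show "\<exists>e\<in>z. sup a b \<le> \<nu> e" by blast
    qed
    then have "?I \<in> FY" using False unfolding FY_def proper_ideal_def by auto
    moreover have "SV \<nu> ?I z" unfolding SV_def using nu_hat_down[OF m z] .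
    ultimately have "par x ?I" using p unfolding perp_def by auto
    then obtain d e where "d \<in> x" "e \<in> z" "d \<le> \<nu> e" unfolding par_def by auto
    then show ?thesis using filter_up x by blast
  qed
next
  assume "\<exists>e\<in>z. \<nu> e \<in> x"
  then obtain e where e: "e \<in> z" "\<nu> e \<in> x" by auto
  show "perp \<nu> x z" unfolding perp_def SV_def par_def
    using nu_hat_sub[OF z _ e(1)] e(2) by blast
qed

lemma star_Xa:
  assumes m: "mqc \<nu>"
  shows "star \<nu> (Xa a) = Xa (\<nu> a)"
proof (cases "a = bot")
  case True
  have "\<nu> bot = top" using m unfolding mqc_def by auto
  then show ?thesis using True Xa_bot Xa_top unfolding star_def FX_def by auto
next
  case False
  have an: "antimono \<nu>" using m unfolding mqc_def by auto
  show ?thesis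
  proof safe
    fix x assume x: "x \<in> star \<nu> (Xa a)"
    then have xF: "x \<in> FX" unfolding star_def by auto
    have up: "{c. a \<le> c} \<in> Xa a" using up_FX False unfolding Xa_def by auto
    then have "perp \<nu> x {c. a \<le> c}" using x unfolding star_def by auto
    then obtain e where "a \<le> e" "\<nu> e \<in> x"
      using perp_iff[OF m _ xF] up unfolding Xa_def by auto
    moreover have "\<nu> e \<le> \<nu> a" using an \<open>a \<le> e\<close> unfolding antimono_def by auto
    ultimately show "x \<in> Xa (\<nu> a)" using xF filter_up unfolding Xa_def by blast
  next
    fix x assume x: "x \<in> Xa (\<nu> a)"
    then have xF: "x \<in> FX" unfolding Xa_def by auto
    show "x \<in> star \<nu> (Xa a)" unfolding star_def
      using xF x perp_iff[OF m _ xF] unfolding Xa_def by auto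
  qed
qed

theorem lemma5p2:
  fixes \<nu> :: "'a::bounded_lattice \<Rightarrow> 'a"
  assumes "mqc \<nu>"
  shows "(\<forall>a. star \<nu> (Xa a) = Xa (\<nu> a))
    \<and> bij_betw (Xa::'a \<Rightarrow> 'a set set) UNIV KOG
    \<and> (\<forall>a b::'a. a \<le> b \<longleftrightarrow> Xa a \<subseteq> Xa b)
    \<and> (\<forall>a b::'a. Xa (inf a b) = Xa a \<inter> Xa b)
    \<and> (\<forall>a b::'a. Xa (sup a b) = gjoin (Xa a) (Xa b))
    \<and> Xa (bot::'a) = {}
    \<and> Xa (top::'a) = FX
    \<and> (\<forall>a. Xa (\<nu> a) = star \<nu> (Xa a))"
proof -
  have inj: "inj (Xa::'a \<Rightarrow> 'a set set)"
    by (rule injI) (metis Xa_le order_antisym order_refl)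
  have "Xa ` (UNIV::'a set) = KOG"
  proof
    show "Xa ` (UNIV::'a set) \<subseteq> KOG"
      unfolding KOG_def using Xa_compact Xa_open Xa_gal by auto
    show "KOG \<subseteq> Xa ` (UNIV::'a set)" using KOG_surj by blast
  qed
  then have "bij_betw (Xa::'a \<Rightarrow> 'a set set) UNIV KOG"
    using inj by (simp add: bij_betw_def)
  then show ?thesis using star_Xa[OF assms] Xa_le Xa_inf Xa_sup Xa_bot Xa_top
    by (intro conjI allI) simp_all
qed

end
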